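(* Consider the one-dimensional compressible Euler equations for a perfect gas with ratio of specific heats $\gamma>1$, with conserved variables $\mathbf U=(\rho,\rho u,\rho E)^T$ and flux $\mathbf F(\mathbf U)=(\rho u,\ \rho u^2+p,\ \rho uE+pu)^T$, where $E=\frac{p}{(\gamma-1)\rho}+\frac{u^2}{2}$, restricted to states with $\rho>0,\ p>0$. Let cells $j$ of widths $\Delta x_j>0$ carry states $\mathbf U_j(t)$, and consider the semi-discrete finite-volume scheme $$\Delta x_j\frac{d\mathbf U_j}{dt}=-\big(\mathbf F_{j+\frac12}-\mathbf F_{j-\frac12}\big),$$ where the interface flux $\mathbf F_{j+\frac12}=(F^1,F^2,F^3)_{j+\frac12}$ is the ECKEP flux $$F^1_{j+\frac12}=\overline{F^1},\qquad F^2_{j+\frac12}=\overline{F^1}\,\overline{u}+\overline{p},\qquad F^3_{j+\frac12}=\overline{F^3}-\frac{\alpha_3}{2}\,\Delta V_3,$$ $$\frac{\alpha_3}{2}=\frac{\overline{F^1}\,\Delta V_1+(\overline{F^1}\,\overline{u}+\overline{p})\,\Delta V_2+\overline{F^3}\,\Delta V_3-\Delta\psi}{\Delta V_3\,\Delta V_3}.$$ Here, for any cell quantity $X$, $\overline{X}=\overline{X}_{j+\frac12}=\tfrac12(X_{j+1}+X_j)$ and $\Delta X=\Delta X_{j+\frac12}=X_{j+1}-X_j$; $F^1,F^3$ denote the first and third components of $\mathbf F(\mathbf U)$ evaluated at cell states; $\mathbf V=(V_1,V_2,V_3)$ is the entropy variable vector and $\psi$ the entropy flux potential defined in the context. Assume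 $\Delta V_3\neq 0$ at every interface. Then: (i) at every interface, $(\mathbf V_{j+1}-\mathbf V_j)\cdot\mathbf F_{j+\frac12}=\psi_{j+1}-\psi_j$; (ii) every solution of the semi-discrete scheme satisfies, for each $j$, $$\Delta x_j\frac{d\eta(\mathbf U_j)}{dt}+\zeta_{j+\frac12}-\zeta_{j-\frac12}=0,\qquad \zeta_{j+\frac12}=\overline{\mathbf V}_{j+\frac12}\cdot\mathbf F_{j+\frac12}-\overline{\psi}_{j+\frac12};$$ (iii) every solution of the semi-discrete scheme satisfies, for each $j$, $$\Delta x_j\frac{d}{dt}\Big(\frac{\rho_ju_j^2}{2}\Big)+K_{j+\frac12}-K_{j-\frac12}=-u_j\big(\overline{p}_{j+\frac12}-\overline{p}_{j-\frac12}\big),\qquad K_{j+\frac12}=\frac{u_{j+1}u_j}{2}\,F^1_{j+\frac12}.$$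
   Context: Specific entropy: $s=\ln(p/\rho^\gamma)$. Mathematical entropy: $\eta(\mathbf U)=-\frac{\rho s}{\gamma-1}$. Entropy variables: $\mathbf V=\frac{d\eta}{d\mathbf U}=\Big(\frac{\gamma-s}{\gamma-1}-\frac{\rho u^2}{2p},\ \frac{\rho u}{p},\ -\frac{\rho}{p}\Big)^T$. Entropy flux potential: $\psi=\mathbf V\cdot\mathbf F(\mathbf U)-\zeta(\mathbf U)=\rho u$, where $\zeta(\mathbf U)=-\frac{\rho us}{\gamma-1}$. Subscript $j$ denotes evaluation at the state $\mathbf U_j$. *)

theory Defs
  imports "HOL-Analysis.Analysis"
begin

text \<open>States are conserved-variable triples U = (rho, rho u, rho E).\<close>
type_synonym state = "real \<times> real \<times> real"

definition dens :: "state \<Rightarrow> real" where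
  "dens U = fst U"

definition vel :: "state \<Rightarrow> real" where
  "vel U = fst (snd U) / fst U"

definition pres :: "real \<Rightarrow> state \<Rightarrow> real" where
  "pres \<gamma> U = (\<gamma> - 1) * (snd (snd U) - (fst (snd U))^2 / (2 * fst U))"

definition flux :: "real \<Rightarrow> state \<Rightarrow> state" where
  "flux \<gamma> U = (dens U * vel U,
               dens U * (vel U)^2 + pres \<gamma> U,
               vel U * snd (snd U) + pres \<gamma> U * vel U)"

definition F1 :: "real \<Rightarrow> state \<Rightarrow> real" where "F1 \<gamma> U = fst (flux \<gamma> U)"
definition F3 :: "real \<Rightarrow> state \<Rightarrow> real" where "F3 \<gamma> U = snd (snd (flux \<gamma> U))"

definition sent :: "real \<Rightarrow> state \<Rightarrow> real" where
  "sent \<gamma> U = ln (pres \<gamma> U / (dens U powr \<gamma>))"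

definition eta :: "real \<Rightarrow> state \<Rightarrow> real" where
  "eta \<gamma> U = - dens U * sent \<gamma> U / (\<gamma> - 1)"

definition V1 :: "real \<Rightarrow> state \<Rightarrow> real" where
  "V1 \<gamma> U = (\<gamma> - sent \<gamma> U) / (\<gamma> - 1) - dens U * (vel U)^2 / (2 * pres \<gamma> U)"
definition V2 :: "real \<Rightarrow> state \<Rightarrow> real" where
  "V2 \<gamma> U = dens U * vel U / pres \<gamma> U"
definition V3 :: "real \<Rightarrow> state \<Rightarrow> real" where
  "V3 \<gamma> U = - dens U / pres \<gamma> U"

definition Vent :: "real \<Rightarrow> state \<Rightarrow> state" where
  "Vent \<gamma> U = (V1 \<gamma> U, V2 \<gamma> U, V3 \<gamma> U)"

definition psi :: "state \<Rightarrow> real" where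
  "psi U = dens U * vel U"

definition zeta :: "real \<Rightarrow> state \<Rightarrow> real" where
  "zeta \<gamma> U = - dens U * vel U * sent \<gamma> U / (\<gamma> - 1)"

definition dot3 :: "state \<Rightarrow> state \<Rightarrow> real" where
  "dot3 a b = fst a * fst b + fst (snd a) * fst (snd b) + snd (snd a) * snd (snd b)"

definition avg :: "real \<Rightarrow> real \<Rightarrow> real" where
  "avg a b = (a + b) / 2"

definition alpha3_half :: "real \<Rightarrow> state \<Rightarrow> state \<Rightarrow> real" where
  "alpha3_half \<gamma> UL UR =
     (avg (F1 \<gamma> UL) (F1 \<gamma> UR) * (V1 \<gamma> UR - V1 \<gamma> UL)
      + (avg (F1 \<gamma> UL) (F1 \<gamma> UR) * avg (vel UL) (vel UR) + avg (pres \<gamma> UL) (pres \<gamma> UR))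
          * (V2 \<gamma> UR - V2 \<gamma> UL)
      + avg (F3 \<gamma> UL) (F3 \<gamma> UR) * (V3 \<gamma> UR - V3 \<gamma> UL)
      - (psi UR - psi UL))
     / ((V3 \<gamma> UR - V3 \<gamma> UL) * (V3 \<gamma> UR - V3 \<gamma> UL))"

definition eckep :: "real \<Rightarrow> state \<Rightarrow> state \<Rightarrow> state" where
  "eckep \<gamma> UL UR =
     (avg (F1 \<gamma> UL) (F1 \<gamma> UR),
      avg (F1 \<gamma> UL) (F1 \<gamma> UR) * avg (vel UL) (vel UR) + avg (pres \<gamma> UL) (pres \<gamma> UR),
      avg (F3 \<gamma> UL) (F3 \<gamma> UR) - alpha3_half \<gamma> UL UR * (V3 \<gamma> UR - V3 \<gamma> UL))"

definition zeta_num :: "real \<Rightarrow> state \<Rightarrow> state \<Rightarrow> real" where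
  "zeta_num \<gamma> UL UR =
     dot3 ((1/2) *\<^sub>R (Vent \<gamma> UL + Vent \<gamma> UR)) (eckep \<gamma> UL UR) - avg (psi UL) (psi UR)"

definition Kflux :: "real \<Rightarrow> state \<Rightarrow> state \<Rightarrow> real" where
  "Kflux \<gamma> UL UR = vel UR * vel UL / 2 * fst (eckep \<gamma> UL UR)"

definition admissible :: "real \<Rightarrow> state \<Rightarrow> bool" where
  "admissible \<gamma> U \<longleftrightarrow> dens U > 0 \<and> pres \<gamma> U > 0"

end

theory Submission
  imports Defs
begin
lemma comp_fst: assumes "(f has_vector_derivative v) (at t)"
  shows "((\<lambda>x. fst (f x)) has_real_derivative fst v) (at t)"
proof -
  have "((\<lambda>x. fst (f x)) has_derivative (\<lambda>x. fst (x *\<^sub>R v))) (at t)"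
    using assms unfolding has_vector_derivative_def by (rule has_derivative_fst)
  moreover have "(\<lambda>x. x * fst v) = (*) (fst v)" by (auto simp: mult.commute)
  ultimately show ?thesis unfolding has_field_derivative_def by simp
qed
lemma comp_snd: assumes "(f has_vector_derivative v) (at t)"
  shows "((\<lambda>x. snd (f x)) has_vector_derivative snd v) (at t)"
proof -
  have "((\<lambda>x. snd (f x)) has_derivative (\<lambda>x. snd (x *\<^sub>R v))) (at t)"
    using assms unfolding has_vector_derivative_def by (rule has_derivative_snd)
  then show ?thesis unfolding has_vector_derivative_def by simp
qed

lemma alg_s: fixes g X A Ap q' a' :: real
  assumes "Ap > 0" "X > 0" "A > 0" "g > 1"
  shows "((g-1)*q'*Ap - (g-1)*X*(g*Ap*a')/A)/((g-1)*(X*Ap)) = q'/X - g*a'/A"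
  using assms by (simp add: field_simps)

lemma alg_e: fixes g X A B S a' b' c' :: real
  assumes "X > 0" "A > 0" "g > 1"
  shows "- (a' * S + A * ((c' - (B / A) * b' + B^2 / (2 * A^2) * a') / X - g * a' / A)) / (g - 1) =
    ((g - S) / (g - 1) - A * (B / A)^2 / (2 * ((g - 1) * X))) * a' +
    A * (B / A) / ((g - 1) * X) * b' + - A / ((g - 1) * X) * c'"
proof -
  obtain h where h: "g = h + 1" "h > 0" using assms by (metis add.commute diff_add_cancel diff_gt_0_iff_gt)
  show ?thesis using assms h(2) unfolding h(1) by (simp add: field_simps power2_eq_square)
qed

lemma eta_deriv:
  assumes g: "\<gamma> > 1" and da: "(a has_real_derivative a') (at t)"
    and db: "(b has_real_derivative b') (at t)"
    and dc: "(c has_real_derivative c') (at t)"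
    and adm: "admissible \<gamma> (a t, b t, c t)"
  shows "((\<lambda>\<tau>. eta \<gamma> (a \<tau>, b \<tau>, c \<tau>)) has_real_derivative
     (V1 \<gamma> (a t, b t, c t) * a' + V2 \<gamma> (a t, b t, c t) * b' + V3 \<gamma> (a t, b t, c t) * c')) (at t)"
proof -
  from adm have a0: "a t > 0" and p0: "(\<gamma> - 1) * (c t - (b t)^2 / (2 * a t)) > 0"
    by (auto simp: admissible_def dens_def pres_def)
  have q0: "c t - (b t)^2 / (2 * a t) > 0" using p0 g by (simp add: zero_less_mult_iff)
  define q' where "q' = c' - (b t / a t) * b' + (b t)^2 / (2 * (a t)^2) * a'"
  define s' where "s' = q' / (c t - (b t)^2 / (2 * a t)) - \<gamma> * a' / a t"
  have dq: "((\<lambda>\<tau>. (\<gamma> - 1) * (c \<tau> - (b \<tau>)^2 / (2 * a \<tau>))) has_real_derivative ((\<gamma> - 1) * q')) (at t)"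
    apply (rule derivative_eq_intros da db dc refl | (use a0 in simp; fail))+
    using a0 unfolding q'_def by (simp add: field_simps power2_eq_square)
  have ds: "((\<lambda>\<tau>. sent \<gamma> (a \<tau>, b \<tau>, c \<tau>)) has_real_derivative s') (at t)"
    unfolding sent_def pres_def dens_def fst_conv snd_conv
    apply (rule dq | rule derivative_eq_intros da refl | (use a0 p0 in simp; fail))+
    apply (subst powr_diff, use a0 in simp)
    unfolding s'_def using a0 q0 g by (intro alg_s) auto
  have de: "((\<lambda>\<tau>. eta \<gamma> (a \<tau>, b \<tau>, c \<tau>)) has_real_derivative
       (- (a' * sent \<gamma> (a t, b t, c t) + a t * s') / (\<gamma> - 1))) (at t)"
    unfolding eta_def dens_def fst_conv
    by (rule derivative_eq_intros ds da refl | (use g in simp; fail))+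
  show ?thesis
    apply (rule DERIV_cong[OF de])
    unfolding V1_def V2_def V3_def pres_def dens_def vel_def fst_conv snd_conv s'_def q'_def
    by (rule alg_e) (use a0 q0 g in auto)
qed

lemma dot3_diff_left: "dot3 (x - y) z = dot3 x z - dot3 y z"
  by (simp add: dot3_def algebra_simps)
lemma dot3_add_left: "dot3 (x + y) z = dot3 x z + dot3 y z"
  by (simp add: dot3_def algebra_simps)
lemma dot3_scaleR_left: "dot3 (r *\<^sub>R x) z = r * dot3 x z"
  by (simp add: dot3_def algebra_simps)
lemma dot3_scaleR_right: "dot3 z (r *\<^sub>R x) = r * dot3 z x"
  by (simp add: dot3_def algebra_simps)
lemma dot3_diff_right: "dot3 z (x - y) = dot3 z x - dot3 z y"
  by (simp add: dot3_def algebra_simps)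
lemma dot3_minus_right: "dot3 z (- x) = - dot3 z x"
  by (simp add: dot3_def algebra_simps)

lemma part1:
  assumes "V3 \<gamma> UR \<noteq> V3 \<gamma> UL"
  shows "dot3 (Vent \<gamma> UR - Vent \<gamma> UL) (eckep \<gamma> UL UR) = psi UR - psi UL"
proof -
  obtain D where D: "V3 \<gamma> UR = V3 \<gamma> UL + D" "D \<noteq> 0" using assms
    by (metis add_diff_cancel_left' diff_add_cancel eq_iff_diff_eq_0)
  show ?thesis
    unfolding dot3_def Vent_def eckep_def alpha3_half_def D(1)
    using D(2) by (simp add: field_simps)
qed

lemma part2_alg:
  assumes "dot3 (Vp - V) Fp = pp - p" "dot3 (V - Vm) Fm = p - pm"
  shows "- dot3 V (Fp - Fm) + (dot3 ((1/2) *\<^sub>R (V + Vp)) Fp - avg p pp)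
          - (dot3 ((1/2) *\<^sub>R (Vm + V)) Fm - avg pm p) = 0"
  using assms unfolding dot3_diff_left dot3_add_left dot3_scaleR_left dot3_diff_right avg_def
  by (simp add: field_simps)

lemma kin_deriv:
  assumes da: "(a has_real_derivative a') (at t)"
    and db: "(b has_real_derivative b') (at t)" and a0: "a t > 0"
  shows "((\<lambda>\<tau>. a \<tau> * (b \<tau> / a \<tau>)^2 / 2) has_real_derivative
      (b t / a t) * b' - (b t / a t)^2 / 2 * a') (at t)"
  apply (rule derivative_eq_intros da db refl | (use a0 in simp; fail))+
  using a0 by (simp add: field_simps power2_eq_square)

theorem mainTheorem1:
  fixes \<gamma> :: real
    and T :: "real set"
    and dx :: "int \<Rightarrow> real"
    and U U' :: "int \<Rightarrow> real \<Rightarrow> state"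
  assumes gam: "\<gamma> > 1"
  shows
   "(\<forall>UL UR. admissible \<gamma> UL \<longrightarrow> admissible \<gamma> UR \<longrightarrow> V3 \<gamma> UR \<noteq> V3 \<gamma> UL \<longrightarrow>
       dot3 (Vent \<gamma> UR - Vent \<gamma> UL) (eckep \<gamma> UL UR) = psi UR - psi UL)
    \<and>
    ((open T
      \<and> (\<forall>j. dx j > 0)
      \<and> (\<forall>j. \<forall>t\<in>T. admissible \<gamma> (U j t))
      \<and> (\<forall>j. \<forall>t\<in>T. V3 \<gamma> (U (j+1) t) \<noteq> V3 \<gamma> (U j t))
      \<and> (\<forall>j. \<forall>t\<in>T. (U j has_vector_derivative U' j t) (at t))
      \<and> (\<forall>j. \<forall>t\<in>T. dx j *\<^sub>R U' j t =
              - (eckep \<gamma> (U j t) (U (j+1) t) - eckep \<gamma> (U (j-1) t) (U j t))))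
     \<longrightarrow>
      (\<forall>j. \<forall>t\<in>T.
         (\<exists>D. ((\<lambda>\<tau>. eta \<gamma> (U j \<tau>)) has_real_derivative D) (at t)
              \<and> dx j * D + zeta_num \<gamma> (U j t) (U (j+1) t) - zeta_num \<gamma> (U (j-1) t) (U j t) = 0)
       \<and> (\<exists>D. ((\<lambda>\<tau>. dens (U j \<tau>) * (vel (U j \<tau>))^2 / 2) has_real_derivative D) (at t)
              \<and> dx j * D + Kflux \<gamma> (U j t) (U (j+1) t) - Kflux \<gamma> (U (j-1) t) (U j t)
                = - vel (U j t) * (avg (pres \<gamma> (U j t)) (pres \<gamma> (U (j+1) t))
                                   - avg (pres \<gamma> (U (j-1) t)) (pres \<gamma> (U j t))))))"
proof (intro conjI impI allI ballI)
  fix UL UR assume "V3 \<gamma> UR \<noteq> V3 \<gamma> UL"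
  then show "dot3 (Vent \<gamma> UR - Vent \<gamma> UL) (eckep \<gamma> UL UR) = psi UR - psi UL" by (rule part1)
next
  fix j t
  assume H: "open T
      \<and> (\<forall>j. dx j > 0)
      \<and> (\<forall>j. \<forall>t\<in>T. admissible \<gamma> (U j t))
      \<and> (\<forall>j. \<forall>t\<in>T. V3 \<gamma> (U (j+1) t) \<noteq> V3 \<gamma> (U j t))
      \<and> (\<forall>j. \<forall>t\<in>T. (U j has_vector_derivative U' j t) (at t))
      \<and> (\<forall>j. \<forall>t\<in>T. dx j *\<^sub>R U' j t =
              - (eckep \<gamma> (U j t) (U (j+1) t) - eckep \<gamma> (U (j-1) t) (U j t)))"
    and tT: "t \<in> T"
  have adm: "admissible \<gamma> (U j t)" using H tT by blast
  have v3p: "V3 \<gamma> (U (j+1) t) \<noteq> V3 \<gamma> (U j t)" using H tT by blast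
  have v3m: "V3 \<gamma> (U j t) \<noteq> V3 \<gamma> (U (j-1) t)" using H tT by (metis diff_add_cancel)
  have dU: "(U j has_vector_derivative U' j t) (at t)" using H tT by blast
  have sch: "dx j *\<^sub>R U' j t = - (eckep \<gamma> (U j t) (U (j+1) t) - eckep \<gamma> (U (j-1) t) (U j t))"
    using H tT by blast
  define a where "a = (\<lambda>\<tau>. fst (U j \<tau>))"
  define b where "b = (\<lambda>\<tau>. fst (snd (U j \<tau>)))"
  define c where "c = (\<lambda>\<tau>. snd (snd (U j \<tau>)))"
  have Ueq: "\<And>\<tau>. U j \<tau> = (a \<tau>, b \<tau>, c \<tau>)" unfolding a_def b_def c_def by simp
  have da: "(a has_real_derivative fst (U' j t)) (at t)"
    unfolding a_def by (rule comp_fst[OF dU])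
  have db: "(b has_real_derivative fst (snd (U' j t))) (at t)"
    unfolding b_def by (rule comp_fst[OF comp_snd[OF dU]])
  have dc: "(c has_real_derivative snd (snd (U' j t))) (at t)"
    unfolding c_def using comp_snd[OF comp_snd[OF dU]]
    by (simp add: has_real_derivative_iff_has_vector_derivative)
  have adm': "admissible \<gamma> (a t, b t, c t)" using adm Ueq by metis
  have a0: "a t > 0" using adm' by (simp add: admissible_def dens_def)
  have Dv: "V1 \<gamma> (a t, b t, c t) * fst (U' j t) + V2 \<gamma> (a t, b t, c t) * fst (snd (U' j t))
       + V3 \<gamma> (a t, b t, c t) * snd (snd (U' j t)) = dot3 (Vent \<gamma> (U j t)) (U' j t)"
    unfolding Ueq dot3_def Vent_def by simp
  show "\<exists>D. ((\<lambda>\<tau>. eta \<gamma> (U j \<tau>)) has_real_derivative D) (at t)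
              \<and> dx j * D + zeta_num \<gamma> (U j t) (U (j+1) t) - zeta_num \<gamma> (U (j-1) t) (U j t) = 0"
  proof (intro exI conjI)
    show "((\<lambda>\<tau>. eta \<gamma> (U j \<tau>)) has_real_derivative dot3 (Vent \<gamma> (U j t)) (U' j t)) (at t)"
      unfolding Dv[symmetric] unfolding Ueq by (rule eta_deriv[OF gam da db dc adm'])
    have "dx j * dot3 (Vent \<gamma> (U j t)) (U' j t) = dot3 (Vent \<gamma> (U j t)) (dx j *\<^sub>R U' j t)"
      by (simp add: dot3_scaleR_right)
    also have "\<dots> = - dot3 (Vent \<gamma> (U j t)) (eckep \<gamma> (U j t) (U (j+1) t) - eckep \<gamma> (U (j-1) t) (U j t))"
      unfolding sch dot3_minus_right ..
    finally show "dx j * dot3 (Vent \<gamma> (U j t)) (U' j t) + zeta_num \<gamma> (U j t) (U (j+1) t)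
        - zeta_num \<gamma> (U (j-1) t) (U j t) = 0"
      unfolding zeta_num_def using part2_alg[OF part1[OF v3p] part1[OF v3m]] by simp
  qed
  have sch1: "dx j * fst (U' j t) = - (fst (eckep \<gamma> (U j t) (U (j+1) t)) - fst (eckep \<gamma> (U (j-1) t) (U j t)))"
    using arg_cong[OF sch, of fst] by simp
  have sch2: "dx j * fst (snd (U' j t)) = - (fst (snd (eckep \<gamma> (U j t) (U (j+1) t))) - fst (snd (eckep \<gamma> (U (j-1) t) (U j t))))"
    using arg_cong[OF sch, of "\<lambda>x. fst (snd x)"] by simp
  have e2: "\<And>UL UR. fst (snd (eckep \<gamma> UL UR)) = fst (eckep \<gamma> UL UR) * avg (vel UL) (vel UR) + avg (pres \<gamma> UL) (pres \<gamma> UR)"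
    by (simp add: eckep_def)
  have vj: "vel (U j t) = b t / a t" unfolding Ueq by (simp add: vel_def)
  show "\<exists>D. ((\<lambda>\<tau>. dens (U j \<tau>) * (vel (U j \<tau>))^2 / 2) has_real_derivative D) (at t)
              \<and> dx j * D + Kflux \<gamma> (U j t) (U (j+1) t) - Kflux \<gamma> (U (j-1) t) (U j t)
                = - vel (U j t) * (avg (pres \<gamma> (U j t)) (pres \<gamma> (U (j+1) t))
                                   - avg (pres \<gamma> (U (j-1) t)) (pres \<gamma> (U j t)))"
  proof (intro exI conjI)
    show "((\<lambda>\<tau>. dens (U j \<tau>) * (vel (U j \<tau>))^2 / 2) has_real_derivative
      vel (U j t) * fst (snd (U' j t)) - (vel (U j t))^2 / 2 * fst (U' j t)) (at t)"
      unfolding vj unfolding Ueq dens_def vel_def fst_conv snd_conv by (rule kin_deriv[OF da db a0])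
    have "dx j * (vel (U j t) * fst (snd (U' j t)) - (vel (U j t))^2 / 2 * fst (U' j t))
       = vel (U j t) * (dx j * fst (snd (U' j t))) - (vel (U j t))^2 / 2 * (dx j * fst (U' j t))"
      by (simp add: algebra_simps)
    also have "\<dots> = vel (U j t) * (- (fst (snd (eckep \<gamma> (U j t) (U (j+1) t))) - fst (snd (eckep \<gamma> (U (j-1) t) (U j t)))))
       - (vel (U j t))^2 / 2 * (- (fst (eckep \<gamma> (U j t) (U (j+1) t)) - fst (eckep \<gamma> (U (j-1) t) (U j t))))"
      unfolding sch1 sch2 ..
    finally have X: "dx j * (vel (U j t) * fst (snd (U' j t)) - (vel (U j t))^2 / 2 * fst (U' j t)) = vel (U j t) * (- (fst (snd (eckep \<gamma> (U j t) (U (j+1) t))) - fst (snd (eckep \<gamma> (U (j-1) t) (U j t)))))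
       - (vel (U j t))^2 / 2 * (- (fst (eckep \<gamma> (U j t) (U (j+1) t)) - fst (eckep \<gamma> (U (j-1) t) (U j t))))" .
    show "dx j * (vel (U j t) * fst (snd (U' j t)) - (vel (U j t))^2 / 2 * fst (U' j t))
        + Kflux \<gamma> (U j t) (U (j+1) t) - Kflux \<gamma> (U (j-1) t) (U j t)
        = - vel (U j t) * (avg (pres \<gamma> (U j t)) (pres \<gamma> (U (j+1) t))
                                   - avg (pres \<gamma> (U (j-1) t)) (pres \<gamma> (U j t)))"
      unfolding X e2 Kflux_def
      by (simp add: avg_def field_simps power2_eq_square)
  qed
qed

end
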